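(* Let $r\ge2$ and let $\{P,Q\}$ be a pair of $r$-patterns forming a mismatch. Then the family of all $\{P,Q\}$-cliques is reconstructible: if $M$ and $N$ are two distinct $\{P,Q\}$-cliques on the same ordered vertex set, then $\mathrm{tr}(M)\neq\mathrm{tr}(N)$.
   Context: An ordered $r$-matching is a set of pairwise disjoint $r$-element subsets (edges) of a linearly ordered vertex set covering it. An $r$-pattern is an ordered $r$-matching of size 2, written as a word over $\{A,B\}$ (each letter $r$ times, starting with $A$). Two edges form pattern $P$ if they induce a matching order-isomorphic to $P$; a $\mathcal P$-clique is an ordered matching all of whose pairs of edges form patterns in $\mathcal P$. An $r$-pattern is collectable if it splits into consecutive blocks $S_1\cdots S_s$ each of the form $A^tB^t$ or $B^tA^t$ ($t\ge1$); its composition is $(|S_1|/2,\dots,|S_s|/2)$. $\{P,Q\}$ is a mismatch if exactly one of them is collectable, or both are collectable with different compositions. The trace $\mathrm{tr}(M)$ of an ordered $r$-matching $M$ is the word over $[r]$ obtained by writing, at each vertex in order, the number $i$ if that vertex is the $i$-th vertex (from the left) of its edge. *)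

theory Defs
  imports Main
begin

text \<open>Letters: True = A, False = B. An r-pattern is a word of length 2r with
  r letters A and r letters B, starting with A.\<close>

definition is_pattern :: "nat \<Rightarrow> bool list \<Rightarrow> bool" where
  "is_pattern r P \<longleftrightarrow> length P = 2 * r \<and> count_list P True = r
     \<and> count_list P False = r \<and> P \<noteq> [] \<and> hd P = True"

definition ordered_matching :: "nat \<Rightarrow> 'a::linorder set \<Rightarrow> 'a set set \<Rightarrow> bool" where
  "ordered_matching r V M \<longleftrightarrow>
     (\<forall>e\<in>M. e \<subseteq> V \<and> card e = r) \<and>
     (\<forall>e\<in>M. \<forall>f\<in>M. e \<noteq> f \<longrightarrow> e \<inter> f = {}) \<and>
     \<Union>M = V"

definition pair_word :: "'a::linorder set \<Rightarrow> 'a set \<Rightarrow> bool list" where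
  "pair_word e f = map (\<lambda>x. x \<in> e) (sorted_list_of_set (e \<union> f))"

definition edge_pattern :: "'a::linorder set \<Rightarrow> 'a set \<Rightarrow> bool list" where
  "edge_pattern e f = (if Min e < Min f then pair_word e f else pair_word f e)"

definition is_clique :: "nat \<Rightarrow> 'a::linorder set \<Rightarrow> bool list set \<Rightarrow> 'a set set \<Rightarrow> bool" where
  "is_clique r V \<P> M \<longleftrightarrow> ordered_matching r V M \<and>
     (\<forall>e\<in>M. \<forall>f\<in>M. e \<noteq> f \<longrightarrow> edge_pattern e f \<in> \<P>)"

text \<open>Blocks: (x, t) stands for x^t (not x)^t, i.e. A^tB^t or B^tA^t.\<close>

definition block :: "bool \<times> nat \<Rightarrow> bool list" where
  "block b = replicate (snd b) (fst b) @ replicate (snd b) (\<not> fst b)"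

definition has_composition :: "bool list \<Rightarrow> nat list \<Rightarrow> bool" where
  "has_composition P c \<longleftrightarrow> (\<exists>bs. P = concat (map block bs) \<and>
      (\<forall>b\<in>set bs. snd b \<ge> 1) \<and> c = map snd bs)"

definition collectable :: "bool list \<Rightarrow> bool" where
  "collectable P \<longleftrightarrow> (\<exists>c. has_composition P c)"

definition mismatch :: "bool list \<Rightarrow> bool list \<Rightarrow> bool" where
  "mismatch P Q \<longleftrightarrow> (collectable P \<noteq> collectable Q) \<or>
     (collectable P \<and> collectable Q \<and> \<not> (\<exists>c. has_composition P c \<and> has_composition Q c))"

definition edge_of :: "'a set set \<Rightarrow> 'a \<Rightarrow> 'a set" where
  "edge_of M v = (THE e. e \<in> M \<and> v \<in> e)"

definition trace :: "'a::linorder set \<Rightarrow> 'a set set \<Rightarrow> nat list" where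
  "trace V M = map (\<lambda>v. card {u \<in> edge_of M v. u \<le> v}) (sorted_list_of_set V)"

end

theory Submission
  imports Defs
begin
lemma sorted_list_of_set_app:
  fixes A B :: "'a::linorder set"
  assumes "finite A" "finite B" "\<forall>x\<in>A. \<forall>y\<in>B. x < y"
  shows "sorted_list_of_set (A \<union> B) = sorted_list_of_set A @ sorted_list_of_set B"
proof -
  let ?l = "sorted_list_of_set A @ sorted_list_of_set B"
  have s: "sorted_wrt (<) ?l"
    using assms by (auto simp: sorted_wrt_append)
  moreover have st: "set ?l = A \<union> B" using assms by auto
  moreover have "length ?l = card (A \<union> B)"
    using s st by (metis distinct_card strict_sorted_iff)
  ultimately show ?thesis using assms sorted_list_of_set_unique[of "A \<union> B" ?l] by auto
qed
lemma pw_split: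
  fixes e f :: "'a::linorder set"
  assumes "finite e" "finite f" "\<forall>x\<in>e\<union>f. \<forall>y\<in>e\<union>f. p x \<longrightarrow> \<not> p y \<longrightarrow> x < y"
  shows "pair_word e f = pair_word {x\<in>e. p x} {x\<in>f. p x} @ pair_word {x\<in>e. \<not> p x} {x\<in>f. \<not> p x}"
proof -
  have u: "e \<union> f = ({x\<in>e. p x} \<union> {x\<in>f. p x}) \<union> ({x\<in>e. \<not> p x} \<union> {x\<in>f. \<not> p x})" by auto
  have "sorted_list_of_set (e \<union> f) = sorted_list_of_set ({x\<in>e. p x} \<union> {x\<in>f. p x}) @ sorted_list_of_set ({x\<in>e. \<not> p x} \<union> {x\<in>f. \<not> p x})"
    apply (subst u) apply (rule sorted_list_of_set_app) using assms by auto
  then have "pair_word e f = map (\<lambda>x. x \<in> e) (sorted_list_of_set ({x\<in>e. p x} \<union> {x\<in>f. p x}))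
     @ map (\<lambda>x. x \<in> e) (sorted_list_of_set ({x\<in>e. \<not> p x} \<union> {x\<in>f. \<not> p x}))"
    unfolding pair_word_def by simp
  moreover have "map (\<lambda>x. x \<in> e) (sorted_list_of_set ({x\<in>e. p x} \<union> {x\<in>f. p x}))
     = pair_word {x\<in>e. p x} {x\<in>f. p x}"
    unfolding pair_word_def by (rule map_cong) (use assms in auto)
  moreover have "map (\<lambda>x. x \<in> e) (sorted_list_of_set ({x\<in>e. \<not> p x} \<union> {x\<in>f. \<not> p x}))
     = pair_word {x\<in>e. \<not> p x} {x\<in>f. \<not> p x}"
    unfolding pair_word_def by (rule map_cong) (use assms in auto)
  ultimately show ?thesis by simp
qed

lemma pw_length: "finite e \<Longrightarrow> finite f \<Longrightarrow> length (pair_word e f) = card (e \<union> f)"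
  by (simp add: pair_word_def)

lemma count_map_filter: "count_list (map g xs) True = length (filter g xs)"
  by (induction xs) auto

lemma count_map_filterF: "count_list (map g xs) False = length (filter (\<lambda>x. \<not> g x) xs)"
  by (induction xs) auto

lemma pw_countT:
  assumes "finite e" "finite f"
  shows "count_list (pair_word e f) True = card e"
proof -
  have "count_list (pair_word e f) True = length (filter (\<lambda>x. x \<in> e) (sorted_list_of_set (e \<union> f)))"
    by (simp add: pair_word_def count_map_filter)
  also have "\<dots> = card (set (filter (\<lambda>x. x \<in> e) (sorted_list_of_set (e \<union> f))))"
    by (simp add: distinct_card[symmetric])
  also have "set (filter (\<lambda>x. x \<in> e) (sorted_list_of_set (e \<union> f))) = e" using assms by auto
  finally show ?thesis .
qed

lemma pw_countF:
  assumes "finite e" "finite f" "e \<inter> f = {}"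
  shows "count_list (pair_word e f) False = card f"
proof -
  have "count_list (pair_word e f) False = length (filter (\<lambda>x. x \<notin> e) (sorted_list_of_set (e \<union> f)))"
    by (simp add: pair_word_def count_map_filterF)
  also have "\<dots> = card (set (filter (\<lambda>x. x \<notin> e) (sorted_list_of_set (e \<union> f))))"
    by (simp add: distinct_card[symmetric])
  also have "set (filter (\<lambda>x. x \<notin> e) (sorted_list_of_set (e \<union> f))) = f" using assms by auto
  finally show ?thesis .
qed

lemma pw_swap:
  assumes "e \<inter> f = {}"
  shows "pair_word f e = map Not (pair_word e f)"
  unfolding pair_word_def
proof (subst Un_commute, subst map_map, rule map_cong)
  fix x assume "x \<in> set (sorted_list_of_set (e \<union> f))"
  then show "(x \<in> f) = (Not \<circ> (\<lambda>x. x \<in> e)) x" using assms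
    by (cases "finite (e \<union> f)") auto
qed simp

lemma pw_nth0:
  assumes "finite e" "finite f" "e \<union> f \<noteq> {}"
  shows "pair_word e f ! 0 = (Min (e \<union> f) \<in> e)"
  unfolding pair_word_def using assms
  by (simp add: sorted_list_of_set_nonempty)

lemma ep_alt:
  assumes "e \<inter> f = {}"
  shows "edge_pattern e f = (if Min e < Min f then pair_word e f else map Not (pair_word e f))"
  unfolding edge_pattern_def using pw_swap[OF assms] by simp

lemma ep_nth0:
  assumes "finite e" "finite f" "e \<noteq> {}" "f \<noteq> {}" "e \<inter> f = {}"
  shows "edge_pattern e f ! 0 = True"
proof -
  have ne: "pair_word e f \<noteq> []" using assms by (simp add: pair_word_def)
  have me: "Min e \<in> e" "Min f \<in> f" using assms by auto
  have "Min (e \<union> f) = min (Min e) (Min f)" using assms by (simp add: Min_Un)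
  show ?thesis
  proof (cases "Min e < Min f")
    case True
    then have "Min (e \<union> f) = Min e" using \<open>Min (e \<union> f) = _\<close> by simp
    then show ?thesis using True assms me by (simp add: ep_alt pw_nth0)
  next
    case False
    then have "Min (e \<union> f) = Min f" using \<open>Min (e \<union> f) = _\<close> by simp
    then have "Min (e \<union> f) \<notin> e" using me assms(5) by (metis disjoint_iff)
    then show ?thesis using False assms me ne by (simp add: ep_alt pw_nth0 nth_map)
  qed
qed

definition rnk :: "'a::linorder set \<Rightarrow> 'a \<Rightarrow> nat" where
  "rnk S x = card {y\<in>S. y \<le> x}"

definition rk :: "'a::linorder set set \<Rightarrow> 'a \<Rightarrow> nat" where
  "rk M v = rnk (edge_of M v) v"

lemma om_edge_sub: "ordered_matching r V M \<Longrightarrow> e \<in> M \<Longrightarrow> e \<subseteq> V"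
  by (simp add: ordered_matching_def)

lemma om_card: "ordered_matching r V M \<Longrightarrow> e \<in> M \<Longrightarrow> card e = r"
  by (simp add: ordered_matching_def)

lemma om_fin: "ordered_matching r V M \<Longrightarrow> finite V \<Longrightarrow> e \<in> M \<Longrightarrow> finite e"
  by (rule finite_subset[OF om_edge_sub])

lemma om_finM: "ordered_matching r V M \<Longrightarrow> finite V \<Longrightarrow> finite M"
proof -
  assume a: "ordered_matching r V M" "finite V"
  have "M \<subseteq> Pow V" using om_edge_sub[OF a(1)] by blast
  then show ?thesis using a(2) by (rule finite_subset[OF _ finite_Pow_iff[THEN iffD2]])
qed

lemma om_disj: "ordered_matching r V M \<Longrightarrow> e \<in> M \<Longrightarrow> f \<in> M \<Longrightarrow> e \<noteq> f \<Longrightarrow> e \<inter> f = {}"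
  by (simp add: ordered_matching_def)

lemma om_ne: "ordered_matching r V M \<Longrightarrow> finite V \<Longrightarrow> r \<ge> 1 \<Longrightarrow> e \<in> M \<Longrightarrow> e \<noteq> {}"
  using om_card by fastforce

lemma om_edge_of:
  assumes "ordered_matching r V M" "e \<in> M" "v \<in> e"
  shows "edge_of M v = e"
  unfolding edge_of_def
proof (rule the_equality)
  show "e \<in> M \<and> v \<in> e" using assms by simp
  fix f assume "f \<in> M \<and> v \<in> f"
  then show "f = e" using om_disj[OF assms(1) assms(2)] assms by blast
qed

lemma om_cover: "ordered_matching r V M \<Longrightarrow> v \<in> V \<Longrightarrow> \<exists>e\<in>M. v \<in> e"
  by (auto simp: ordered_matching_def)

lemma om_edge_of_in:
  assumes "ordered_matching r V M" "v \<in> V"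
  shows "edge_of M v \<in> M" "v \<in> edge_of M v"
  using om_cover[OF assms] om_edge_of[OF assms(1)] by auto

lemma om_rk: "ordered_matching r V M \<Longrightarrow> e \<in> M \<Longrightarrow> v \<in> e \<Longrightarrow> rk M v = rnk e v"
  by (simp add: rk_def om_edge_of)

lemma trace_eq_rk:
  assumes "finite V" "trace V M = trace V N" "v \<in> V"
  shows "rk M v = rk N v"
proof -
  have "v \<in> set (sorted_list_of_set V)" using assms by simp
  then show ?thesis using assms(2) unfolding trace_def rk_def rnk_def
    by (simp add: map_eq_conv)
qed

lemma rnk_mono: "finite S \<Longrightarrow> x \<le> y \<Longrightarrow> rnk S x \<le> rnk S y"
  unfolding rnk_def by (rule card_mono) auto

lemma rnk_strict: "finite S \<Longrightarrow> y \<in> S \<Longrightarrow> x < y \<Longrightarrow> rnk S x < rnk S y"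
  unfolding rnk_def
proof (rule psubset_card_mono)
  assume a: "finite S" "y \<in> S" "x < y"
  then show "finite {z \<in> S. z \<le> y}" by simp
  have "y \<notin> {z \<in> S. z \<le> x}" using a by auto
  moreover have "y \<in> {z \<in> S. z \<le> y}" using a by auto
  moreover have "{z \<in> S. z \<le> x} \<subseteq> {z \<in> S. z \<le> y}" using a by auto
  ultimately show "{z \<in> S. z \<le> x} \<subset> {z \<in> S. z \<le> y}" by blast
qed

lemma rnk_le_card: "finite S \<Longrightarrow> rnk S x \<le> card S"
  unfolding rnk_def by (rule card_mono) auto

lemma rnk_less: 
  assumes "finite S" "x \<in> S"
  shows "card {y\<in>S. y < x} = rnk S x - 1"
proof -
  have "{y\<in>S. y \<le> x} = insert x {y\<in>S. y < x}" using assms by auto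
  then show ?thesis unfolding rnk_def using assms by simp
qed

lemma rnk_pos: "finite S \<Longrightarrow> x \<in> S \<Longrightarrow> rnk S x \<ge> 1"
proof -
  assume a: "finite S" "x \<in> S"
  then have "x \<in> {y\<in>S. y \<le> x}" by simp
  then have "card {y\<in>S. y \<le> x} > 0" using a by (subst card_gt_0_iff) auto
  then show ?thesis unfolding rnk_def by simp
qed

lemma rnk_inj: "finite S \<Longrightarrow> inj_on (rnk S) S"
proof (rule inj_onI)
  fix x y assume "finite S" "x \<in> S" "y \<in> S" "rnk S x = rnk S y"
  then show "x = y" using rnk_strict[of S x y] rnk_strict[of S y x]
    by (cases x y rule: linorder_cases) auto
qed

lemma rnk_image: 
  assumes "finite S"
  shows "rnk S ` S = {1..card S}"
proof -
  have a: "rnk S ` S \<subseteq> {1..card S}" using rnk_pos[OF assms] rnk_le_card[OF assms] by auto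
  have b: "card (rnk S ` S) = card {1..card S}"
    using card_image[OF rnk_inj[OF assms]] by simp
  show ?thesis by (rule card_subset_eq[OF _ a b]) simp
qed

lemma card_rnk_le:
  assumes "finite S"
  shows "card {x\<in>S. rnk S x \<le> K} = min K (card S)"
proof -
  have "rnk S ` {x\<in>S. rnk S x \<le> K} = {1..card S} \<inter> {..K}"
  proof
    show "rnk S ` {x \<in> S. rnk S x \<le> K} \<subseteq> {1..card S} \<inter> {..K}"
      using rnk_image[OF assms] by blast
    show "{1..card S} \<inter> {..K} \<subseteq> rnk S ` {x \<in> S. rnk S x \<le> K}"
    proof
      fix i assume i: "i \<in> {1..card S} \<inter> {..K}"
      then obtain x where "x \<in> S" "rnk S x = i" using rnk_image[OF assms]
        by (metis IntD1 imageE)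
      then show "i \<in> rnk S ` {x \<in> S. rnk S x \<le> K}" using i by force
    qed
  qed
  moreover have "{1..card S} \<inter> {..K} = {1..min K (card S)}" by auto
  moreover have "inj_on (rnk S) {x\<in>S. rnk S x \<le> K}"
    by (rule inj_on_subset[OF rnk_inj[OF assms]]) auto
  ultimately show ?thesis using card_image[of "rnk S" "{x\<in>S. rnk S x \<le> K}"] by simp
qed

lemma count_take_le: "count_list (take n L) x \<le> count_list L x"
proof -
  have "count_list L x = count_list (take n L) x + count_list (drop n L) x"
    by (metis append_take_drop_id count_list_append)
  then show ?thesis by simp
qed

lemma bal_prefix:
  assumes "W = U @ Z" "count_list (take (2*K) W) True = K" "count_list (take (2*K) W) False = K"
    "count_list U False < K"
  shows "count_list U True \<le> K"
proof (cases "2*K \<le> length U")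
  case True
  then have "take (2*K) W = take (2*K) U" using assms(1) by simp
  then have "count_list (take (2*K) W) False \<le> count_list U False" using count_take_le by metis
  then show ?thesis using assms by simp
next
  case False
  then have "take (2*K) W = U @ take (2*K - length U) Z" using assms(1) by simp
  then have "count_list U True \<le> count_list (take (2*K) W) True" by simp
  then show ?thesis using assms by simp
qed

lemma count_not_T: "count_list (map Not X) True = count_list X False"
  by (induction X) auto
lemma count_not_F: "count_list (map Not X) False = count_list X True"
  by (induction X) auto

lemma om_sym:
  assumes "ordered_matching r V M" "y \<in> V" "z \<in> V"
  shows "z \<in> edge_of M y \<longleftrightarrow> y \<in> edge_of M z"
proof -
  have a: "edge_of M y \<in> M" "y \<in> edge_of M y" "edge_of M z \<in> M" "z \<in> edge_of M z"
    using om_edge_of_in assms by auto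
  show ?thesis
  proof
    assume "z \<in> edge_of M y"
    then have "edge_of M z = edge_of M y" using om_edge_of[OF assms(1) a(1)] by simp
    then show "y \<in> edge_of M z" using a by simp
  next
    assume "y \<in> edge_of M z"
    then have "edge_of M y = edge_of M z" using om_edge_of[OF assms(1) a(3)] by simp
    then show "z \<in> edge_of M y" using a by simp
  qed
qed

lemma min_prefix:
  fixes e :: "'a::linorder set"
  assumes "finite e" "{x\<in>e. x < v} \<noteq> {}"
  shows "Min e = Min {x\<in>e. x < v}"
proof -
  obtain a where a: "a \<in> e" "a < v" using assms by auto
  have "Min e \<le> a" using a assms by simp
  then have "Min e < v" using a by simp
  moreover have "Min e \<in> e" using assms(1) a(1) by (intro Min_in) auto
  ultimately have "Min e \<in> {x\<in>e. x < v}" by simp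
  then show ?thesis using assms
    by (intro antisym) (auto intro: Min_le)
qed

definition pr :: "'a::linorder set set \<Rightarrow> 'a \<Rightarrow> 'a set" where
  "pr X v = {u \<in> edge_of X v. u < v}"

lemma pr_eq_edges:
  assumes "ordered_matching r V M" "ordered_matching r V N" "\<forall>v\<in>V. pr M v = pr N v"
    "v \<in> V" "u \<in> edge_of M v"
  shows "u \<in> edge_of N v"
proof -
  have uV: "u \<in> V" using assms om_edge_of_in om_edge_sub by blast
  consider "u < v" | "u = v" | "v < u" by fastforce
  then show ?thesis
  proof cases
    case 1
    then have "u \<in> pr M v" using assms(5) by (simp add: pr_def)
    then have "u \<in> pr N v" using assms(3,4) by simp
    then show ?thesis by (simp add: pr_def)
  next
    case 2
    then show ?thesis using om_edge_of_in[OF assms(2) assms(4)] by simp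
  next
    case 3
    have "v \<in> edge_of M u" using om_sym[OF assms(1) assms(4) uV] assms(5) by simp
    then have "v \<in> pr M u" using 3 by (simp add: pr_def)
    then have "v \<in> pr N u" using assms(3) uV by simp
    then have "v \<in> edge_of N u" by (simp add: pr_def)
    then show ?thesis using om_sym[OF assms(2) assms(4) uV] by simp
  qed
qed

lemma pr_all_eq:
  assumes "ordered_matching r V M" "ordered_matching r V N" "\<forall>v\<in>V. pr M v = pr N v" "r \<ge> 1"
  shows "M \<subseteq> N"
proof
  fix e assume e: "e \<in> M"
  have "card e = r" using om_card assms(1) e by blast
  then obtain x where x: "x \<in> e" using assms(4) by fastforce
  then have xV: "x \<in> V" using om_edge_sub[OF assms(1) e] by blast
  have ee: "edge_of M x = e" using om_edge_of[OF assms(1) e x] .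
  have "edge_of M x = edge_of N x"
  proof
    show "edge_of M x \<subseteq> edge_of N x" using pr_eq_edges[OF assms(1,2,3) xV] by blast
    have "\<forall>v\<in>V. pr N v = pr M v" using assms(3) by simp
    then show "edge_of N x \<subseteq> edge_of M x" using pr_eq_edges[OF assms(2,1) _ xV] by blast
  qed
  then show "e \<in> N" using ee om_edge_of_in[OF assms(2) xV] by simp
qed

lemma first_diff:
  fixes M N :: "'a::linorder set set"
  assumes fin: "finite V" and r1: "r \<ge> 1"
    and cM: "is_clique r V PP M" and cN: "is_clique r V PP N"
    and rkeq: "\<forall>v\<in>V. rk M v = rk N v" and ne: "M \<noteq> N"
  shows "\<exists>k R1 R2. R1 \<in> PP \<and> R2 \<in> PP \<and> 1 \<le> k \<and> 2*k < length R1 \<and> 2*k < length R2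
     \<and> take (2*k) R1 = take (2*k) R2 \<and> R1 ! (2*k) \<noteq> R2 ! (2*k)
     \<and> count_list (take (2*k) R1) True = k \<and> count_list (take (2*k) R1) False = k"
proof -
  have oM: "ordered_matching r V M" and oN: "ordered_matching r V N"
    using cM cN by (auto simp: is_clique_def)
  have pM: "\<And>e f. e \<in> M \<Longrightarrow> f \<in> M \<Longrightarrow> e \<noteq> f \<Longrightarrow> edge_pattern e f \<in> PP"
    using cM by (auto simp: is_clique_def)
  have pN: "\<And>e f. e \<in> N \<Longrightarrow> f \<in> N \<Longrightarrow> e \<noteq> f \<Longrightarrow> edge_pattern e f \<in> PP"
    using cN by (auto simp: is_clique_def)
  define D where "D = {v\<in>V. pr M v \<noteq> pr N v}"
  have "D \<noteq> {}"
  proof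
    assume "D = {}"
    then have a: "\<forall>v\<in>V. pr M v = pr N v" by (auto simp: D_def)
    then have b: "\<forall>v\<in>V. pr N v = pr M v" by simp
    have "M \<subseteq> N" using pr_all_eq[OF oM oN a r1] .
    moreover have "N \<subseteq> M" using pr_all_eq[OF oN oM b r1] .
    ultimately show False using ne by simp
  qed
  moreover have "finite D" using fin by (simp add: D_def)
  ultimately have vD: "Min D \<in> D" using Min_in by blast
  define v where "v = Min D"
  have vV: "v \<in> V" and vd: "pr M v \<noteq> pr N v" using vD by (auto simp: v_def D_def)
  have before: "\<And>u. u \<in> V \<Longrightarrow> u < v \<Longrightarrow> pr M u = pr N u"
  proof (rule ccontr)
    fix u assume "u \<in> V" "u < v" "pr M u \<noteq> pr N u"
    then have "u \<in> D" by (simp add: D_def)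
    then have "v \<le> u" using \<open>finite D\<close> by (simp add: v_def)
    then show False using \<open>u < v\<close> by simp
  qed
  have S: "\<And>y z. y \<in> V \<Longrightarrow> z \<in> V \<Longrightarrow> y < v \<Longrightarrow> z < v \<Longrightarrow> z \<in> edge_of M y \<longleftrightarrow> z \<in> edge_of N y"
  proof -
    fix y z assume yz: "y \<in> V" "z \<in> V" "y < v" "z < v"
    consider "z < y" | "z = y" | "y < z" by fastforce
    then show "z \<in> edge_of M y \<longleftrightarrow> z \<in> edge_of N y"
    proof cases
      case 1
      have "z \<in> edge_of M y \<longleftrightarrow> z \<in> pr M y" using 1 by (simp add: pr_def)
      also have "\<dots> \<longleftrightarrow> z \<in> pr N y" using before[OF yz(1,3)] by simp
      also have "\<dots> \<longleftrightarrow> z \<in> edge_of N y" using 1 by (simp add: pr_def)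
      finally show ?thesis .
    next
      case 2
      then show ?thesis using om_edge_of_in[OF oM yz(1)] om_edge_of_in[OF oN yz(1)] by simp
    next
      case 3
      have "z \<in> edge_of M y \<longleftrightarrow> y \<in> edge_of M z" using om_sym[OF oM yz(1,2)] .
      also have "\<dots> \<longleftrightarrow> y \<in> pr M z" using 3 by (simp add: pr_def)
      also have "\<dots> \<longleftrightarrow> y \<in> pr N z" using before[OF yz(2,4)] by simp
      also have "\<dots> \<longleftrightarrow> y \<in> edge_of N z" using 3 by (simp add: pr_def)
      also have "\<dots> \<longleftrightarrow> z \<in> edge_of N y" using om_sym[OF oN yz(1,2)] by simp
      finally show ?thesis .
    qed
  qed
  define e where "e = edge_of M v"
  define h where "h = edge_of N v"
  define e' where "e' = pr M v"
  define f' where "f' = pr N v"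
  have eM: "e \<in> M" "v \<in> e" using om_edge_of_in[OF oM vV] by (auto simp: e_def)
  have hN: "h \<in> N" "v \<in> h" using om_edge_of_in[OF oN vV] by (auto simp: h_def)
  have fine: "finite e" using om_fin[OF oM fin eM(1)] .
  have finh: "finite h" using om_fin[OF oN fin hN(1)] .
  have e'_def2: "e' = {x\<in>e. x < v}" by (simp add: e'_def pr_def e_def)
  have f'_def2: "f' = {x\<in>h. x < v}" by (simp add: f'_def pr_def h_def)
  have ce': "card e' = rk M v - 1" using rnk_less[OF fine eM(2)] om_rk[OF oM eM] e'_def2 by simp
  have cf': "card f' = rk N v - 1" using rnk_less[OF finh hN(2)] om_rk[OF oN hN] f'_def2 by simp
  define k where "k = card e'"
  have cf'k: "card f' = k" using ce' cf' rkeq vV by (simp add: k_def)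
  have fine': "finite e'" "finite f'" using fine finh by (auto simp: e'_def2 f'_def2)
  have e'f': "e' \<noteq> f'" using vd by (simp add: e'_def f'_def)
  have k1: "1 \<le> k"
  proof (rule ccontr)
    assume "\<not> 1 \<le> k"
    then have "k = 0" by simp
    then have "e' = {}" "f' = {}" using fine' cf'k by (auto simp: k_def)
    then show False using e'f' by simp
  qed
  then obtain a where a: "a \<in> e'" using k_def by fastforce
  obtain b where b: "b \<in> f'" using k1 cf'k by fastforce
  have aV: "a \<in> V" "a < v" using a e'_def2 om_edge_sub[OF oM eM(1)] by auto
  have bV: "b \<in> V" "b < v" using b f'_def2 om_edge_sub[OF oN hN(1)] by auto
  define f where "f = edge_of M b"
  define g where "g = edge_of N a"
  have fM: "f \<in> M" "b \<in> f" using om_edge_of_in[OF oM bV(1)] by (auto simp: f_def)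
  have gN: "g \<in> N" "a \<in> g" using om_edge_of_in[OF oN aV(1)] by (auto simp: g_def)
  have hb: "edge_of N b = h" using om_edge_of[OF oN hN(1)] b f'_def2 by simp
  have ea: "edge_of M a = e" using om_edge_of[OF oM eM(1)] a e'_def2 by simp
  have f_pre: "{x\<in>f. x < v} = f'"
  proof (rule set_eqI)
    fix u
    show "u \<in> {x\<in>f. x < v} \<longleftrightarrow> u \<in> f'"
    proof
      assume u: "u \<in> {x\<in>f. x < v}"
      then have uV: "u \<in> V" using om_edge_sub[OF oM fM(1)] by auto
      have "u \<in> edge_of N b" using S[OF bV(1) uV bV(2)] u by (simp add: f_def)
      then show "u \<in> f'" using hb u f'_def2 by simp
    next
      assume u: "u \<in> f'"
      then have uV: "u \<in> V" "u < v" using om_edge_sub[OF oN hN(1)] f'_def2 by auto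
      have "u \<in> edge_of N b" using hb u f'_def2 by simp
      then have "u \<in> edge_of M b" using S[OF bV(1) uV(1) bV(2) uV(2)] by simp
      then show "u \<in> {x\<in>f. x < v}" using uV by (simp add: f_def)
    qed
  qed
  have g_pre: "{x\<in>g. x < v} = e'"
  proof (rule set_eqI)
    fix u
    show "u \<in> {x\<in>g. x < v} \<longleftrightarrow> u \<in> e'"
    proof
      assume u: "u \<in> {x\<in>g. x < v}"
      then have uV: "u \<in> V" using om_edge_sub[OF oN gN(1)] by auto
      have "u \<in> edge_of M a" using S[OF aV(1) uV aV(2)] u by (simp add: g_def)
      then show "u \<in> e'" using ea u e'_def2 by simp
    next
      assume u: "u \<in> e'"
      then have uV: "u \<in> V" "u < v" using om_edge_sub[OF oM eM(1)] e'_def2 by auto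
      have "u \<in> edge_of M a" using ea u e'_def2 by simp
      then have "u \<in> edge_of N a" using S[OF aV(1) uV(1) aV(2) uV(2)] by simp
      then show "u \<in> {x\<in>g. x < v}" using uV by (simp add: g_def)
    qed
  qed
  have ef: "e \<noteq> f" using e'f' f_pre e'_def2 by auto
  have gh: "g \<noteq> h" using e'f' g_pre f'_def2 by auto
  have finf: "finite f" using om_fin[OF oM fin fM(1)] .
  have fing: "finite g" using om_fin[OF oN fin gN(1)] .
  have dEF: "e \<inter> f = {}" using om_disj[OF oM eM(1) fM(1) ef] .
  have dGH: "g \<inter> h = {}" using om_disj[OF oN gN(1) hN(1) gh] .
  have vf: "v \<notin> f" using dEF eM(2) by blast
  have vg: "v \<notin> g" using dGH hN(2) by blast
  have de'f': "e' \<inter> f' = {}" using dEF e'_def2 f_pre by blast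
  have sep: "\<And>X. \<forall>x\<in>X. \<forall>y\<in>X. x < v \<longrightarrow> \<not> y < v \<longrightarrow> x < y" by auto
  define W0 where "W0 = pair_word e' f'"
  define W1 where "W1 = pair_word {x\<in>e. \<not> x < v} {x\<in>f. \<not> x < v}"
  define W2 where "W2 = pair_word {x\<in>g. \<not> x < v} {x\<in>h. \<not> x < v}"
  have pef: "pair_word e f = W0 @ W1"
    using pw_split[OF fine finf sep[of "e \<union> f"]] by (simp add: W0_def W1_def e'_def2 f_pre)
  have pgh: "pair_word g h = W0 @ W2"
    using pw_split[OF fing finh sep[of "g \<union> h"]] by (simp add: W0_def W2_def f'_def2 g_pre)
  have minv1: "Min ({x\<in>e. \<not> x < v} \<union> {x\<in>f. \<not> x < v}) = v"
    using eM(2) fine finf by (intro Min_eqI) auto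
  have minv2: "Min ({x\<in>g. \<not> x < v} \<union> {x\<in>h. \<not> x < v}) = v"
    using hN(2) fing finh by (intro Min_eqI) auto
  have W1_0: "W1 ! 0 = True" unfolding W1_def
    using pw_nth0[of "{x\<in>e. \<not> x < v}" "{x\<in>f. \<not> x < v}"] minv1 eM(2) fine finf by auto
  have W2_0: "W2 ! 0 = False" unfolding W2_def
    using pw_nth0[of "{x\<in>g. \<not> x < v}" "{x\<in>h. \<not> x < v}"] minv2 hN(2) vg fing finh by auto
  have W1ne: "length W1 > 0" unfolding W1_def using eM(2) fine finf by (simp add: pw_length card_gt_0_iff) blast
  have W2ne: "length W2 > 0" unfolding W2_def using hN(2) fing finh by (simp add: pw_length card_gt_0_iff) blast
  have lW0: "length W0 = 2*k" unfolding W0_def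
    using pw_length[OF fine'] card_Un_disjoint[OF fine' de'f'] k_def cf'k by simp
  have cW0T: "count_list W0 True = k" unfolding W0_def using pw_countT[OF fine'] k_def by simp
  have cW0F: "count_list W0 False = k" unfolding W0_def using pw_countF[OF fine' de'f'] cf'k by simp
  have ne': "e' \<noteq> {}" "f' \<noteq> {}" using k1 k_def cf'k by auto
  have me: "Min e = Min e'" using min_prefix[OF fine, of v] ne' e'_def2 by simp
  have mf: "Min f = Min f'" using min_prefix[OF finf, of v] ne' f_pre by simp
  have mg: "Min g = Min e'" using min_prefix[OF fing, of v] ne' g_pre by simp
  have mh: "Min h = Min f'" using min_prefix[OF finh, of v] ne' f'_def2 by simp
  define c where "c = (Min e' < Min f')"
  define R1 where "R1 = edge_pattern e f"
  define R2 where "R2 = edge_pattern g h"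
  have R1: "R1 = (if c then W0 @ W1 else map Not (W0 @ W1))"
    unfolding R1_def c_def using ep_alt[OF dEF] pef me mf by simp
  have R2: "R2 = (if c then W0 @ W2 else map Not (W0 @ W2))"
    unfolding R2_def c_def using ep_alt[OF dGH] pgh mg mh by simp
  have R1P: "R1 \<in> PP" using pM[OF eM(1) fM(1) ef] by (simp add: R1_def)
  have R2P: "R2 \<in> PP" using pN[OF gN(1) hN(1) gh] by (simp add: R2_def)
  have t1: "take (2*k) R1 = (if c then W0 else map Not W0)" using R1 lW0 by (simp add: take_map)
  have t2: "take (2*k) R2 = (if c then W0 else map Not W0)" using R2 lW0 by (simp add: take_map)
  have n1: "R1 ! (2*k) = (if c then True else False)" using R1 lW0 W1_0 W1ne by (auto simp: nth_append)
  have n2: "R2 ! (2*k) = (if c then False else True)" using R2 lW0 W2_0 W2ne by (auto simp: nth_append)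
  have l1: "2*k < length R1" using R1 lW0 W1ne by simp
  have l2: "2*k < length R2" using R2 lW0 W2ne by simp
  have cT: "count_list (take (2*k) R1) True = k" using t1 cW0T cW0F by (simp add: count_not_T)
  have cF: "count_list (take (2*k) R1) False = k" using t1 cW0T cW0F by (simp add: count_not_F)
  show ?thesis
    apply (rule exI[of _ k], rule exI[of _ R1], rule exI[of _ R2])
    using R1P R2P k1 l1 l2 t1 t2 n1 n2 cT cF by simp
qed

definition nrm :: "bool list \<Rightarrow> bool list" where
  "nrm s = (if s ! 0 then s else map Not s)"

lemma count_repl: "count_list (replicate n x) y = (if x = y then n else 0)"
  by (induction n) auto

lemma count_block_T: "count_list (block b) True = snd b"
  by (cases b) (auto simp: block_def count_repl)
lemma count_block_F: "count_list (block b) False = snd b"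
  by (cases b) (auto simp: block_def count_repl)

lemma split_blocks:
  "concat (map block bs) = w @ s \<Longrightarrow> count_list w True = count_list w False
   \<Longrightarrow> \<exists>bs1 bs2. bs = bs1 @ bs2 \<and> concat (map block bs1) = w \<and> concat (map block bs2) = s"
proof (induction bs arbitrary: w)
  case Nil
  then show ?case by simp
next
  case (Cons b bs)
  obtain x t where b: "b = (x, t)" by fastforce
  have lb: "length (block b) = 2 * t" by (simp add: b block_def)
  show ?case
  proof (cases "w = []")
    case True
    then show ?thesis using Cons.prems by (intro exI[of _ "[]"] exI[of _ "b # bs"]) auto
  next
    case wne: False
    show ?thesis
    proof (cases "2 * t \<le> length w")
      case True
      have "block b @ concat (map block bs) = w @ s" using Cons.prems by simp
      then obtain w' where w': "w = block b @ w'" "concat (map block bs) = w' @ s"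
        using True lb by (metis append_eq_append_conv_if append_take_drop_id)
      have "count_list w' True = count_list w' False"
        using Cons.prems(2) w'(1) count_block_T[of b] count_block_F[of b] by simp
      then obtain bs1 bs2 where "bs = bs1 @ bs2" "concat (map block bs1) = w'" "concat (map block bs2) = s"
        using Cons.IH[OF w'(2)] by blast
      then show ?thesis using w'(1) by (intro exI[of _ "b # bs1"] exI[of _ bs2]) auto
    next
      case False
      have "take (length w) (block b @ concat (map block bs)) = w" using Cons.prems
        by (metis append_eq_conv_conj concat.simps(2) list.simps(9))
      then have wt: "w = take (length w) (block b)" using False lb by simp
      define n where "n = length w"
      have n0: "n > 0" using wne by (simp add: n_def)
      have ntt: "n < 2 * t" using False by (simp add: n_def)
      show ?thesis
      proof (cases "n \<le> t")
        case True
        then have "w = replicate n x" using wt by (simp add: b block_def n_def)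
        then have "count_list w x = n" "count_list w (\<not> x) = 0" by (auto simp: count_repl)
        then show ?thesis using Cons.prems(2) n0 by (cases x) auto
      next
        case False
        have mn: "min (n - t) t = n - t" using ntt by simp
        then have "w = replicate t x @ replicate (n - t) (\<not> x)" using wt False
          by (simp add: b block_def n_def take_append)
        then have "count_list w x = t" "count_list w (\<not> x) = n - t" by (auto simp: count_repl)
        then show ?thesis using Cons.prems(2) ntt by (cases x) auto
      qed
    qed
  qed
qed

lemma block_not: "map Not (block b) = block (\<not> fst b, snd b)"
  by (simp add: block_def)

lemma hc_not: "has_composition s c \<Longrightarrow> has_composition (map Not s) c"
proof -
  assume "has_composition s c"
  then obtain bs where bs: "s = concat (map block bs)" "\<forall>b\<in>set bs. snd b \<ge> 1" "c = map snd bs"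
    by (auto simp: has_composition_def)
  define bs' where "bs' = map (\<lambda>b. (\<not> fst b, snd b)) bs"
  have "map Not s = concat (map block bs')" unfolding bs(1) bs'_def
    by (induction bs) (auto simp: block_not)
  moreover have "\<forall>b\<in>set bs'. snd b \<ge> 1" using bs(2) by (auto simp: bs'_def)
  moreover have "c = map snd bs'" using bs(3) by (simp add: bs'_def comp_def)
  ultimately show ?thesis by (auto simp: has_composition_def)
qed

lemma hc_nrm: "has_composition (nrm s) c \<longleftrightarrow> has_composition s c"
proof (cases "s ! 0")
  case True
  then show ?thesis by (simp add: nrm_def)
next
  case False
  have "map Not (map Not s) = s" by (induction s) auto
  then show ?thesis using False hc_not[of s c] hc_not[of "map Not s" c] by (auto simp: nrm_def)
qed

lemma coll_nrm: "collectable (nrm s) \<longleftrightarrow> collectable s"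
  by (simp add: collectable_def hc_nrm)

lemma hc_append:
  assumes "w = concat (map block bs1)" "\<forall>b\<in>set bs1. snd b \<ge> 1" "has_composition s c"
  shows "has_composition (w @ s) (map snd bs1 @ c)"
proof -
  obtain bs where bs: "s = concat (map block bs)" "\<forall>b\<in>set bs. snd b \<ge> 1" "c = map snd bs"
    using assms(3) by (auto simp: has_composition_def)
  show ?thesis unfolding has_composition_def
    by (rule exI[of _ "bs1 @ bs"]) (use assms bs in auto)
qed

lemma coll_split:
  assumes "collectable (w @ s)" "count_list w True = count_list w False"
  shows "\<exists>bs1. w = concat (map block bs1) \<and> (\<forall>b\<in>set bs1. snd b \<ge> 1) \<and> collectable s"
proof -
  obtain c bs where bs: "w @ s = concat (map block bs)" "\<forall>b\<in>set bs. snd b \<ge> 1"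
    using assms(1) by (auto simp: collectable_def has_composition_def)
  obtain bs1 bs2 where sp: "bs = bs1 @ bs2" "concat (map block bs1) = w" "concat (map block bs2) = s"
    using split_blocks[OF bs(1)[symmetric] assms(2)] by blast
  have "has_composition s (map snd bs2)" unfolding has_composition_def
    using sp bs(2) by auto
  then show ?thesis using sp bs(2) by (auto simp: collectable_def)
qed

lemma coll_back: "collectable s \<Longrightarrow> w = concat (map block bs1) \<Longrightarrow> (\<forall>b\<in>set bs1. snd b \<ge> 1)
     \<Longrightarrow> collectable (w @ s)"
proof -
  assume a: "collectable s" "w = concat (map block bs1)" "\<forall>b\<in>set bs1. snd b \<ge> 1"
  then obtain c where "has_composition s c" by (auto simp: collectable_def)
  then have "has_composition (w @ s) (map snd bs1 @ c)" using hc_append[OF a(2,3)] by simp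
  then show ?thesis by (auto simp: collectable_def)
qed

lemma mismatch_suffix:
  assumes "mismatch (w @ sP) (w @ sQ)" "count_list w True = count_list w False"
  shows "mismatch (nrm sP) (nrm sQ)"
proof -
  consider "collectable (w @ sP)" "\<not> collectable (w @ sQ)"
    | "\<not> collectable (w @ sP)" "collectable (w @ sQ)"
    | "collectable (w @ sP)" "collectable (w @ sQ)"
        "\<not> (\<exists>c. has_composition (w @ sP) c \<and> has_composition (w @ sQ) c)"
    using assms(1) unfolding mismatch_def by blast
  then show ?thesis
  proof cases
    case 1
    obtain bs1 where b1: "w = concat (map block bs1)" "\<forall>b\<in>set bs1. snd b \<ge> 1" "collectable sP"
      using coll_split[OF 1(1) assms(2)] by blast
    have "\<not> collectable sQ" using coll_back[of sQ w bs1] b1 1(2) by blast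
    then show ?thesis using b1 by (simp add: mismatch_def coll_nrm)
  next
    case 2
    obtain bs1 where b1: "w = concat (map block bs1)" "\<forall>b\<in>set bs1. snd b \<ge> 1" "collectable sQ"
      using coll_split[OF 2(2) assms(2)] by blast
    have "\<not> collectable sP" using coll_back[of sP w bs1] b1 2(1) by blast
    then show ?thesis using b1 by (simp add: mismatch_def coll_nrm)
  next
    case 3
    obtain bs1 where b1: "w = concat (map block bs1)" "\<forall>b\<in>set bs1. snd b \<ge> 1" "collectable sP"
      using coll_split[OF 3(1) assms(2)] by blast
    obtain bs2 where b2: "collectable sQ"
      using coll_split[OF 3(2) assms(2)] by blast
    have "\<not> (\<exists>c. has_composition sP c \<and> has_composition sQ c)"
    proof
      assume "\<exists>c. has_composition sP c \<and> has_composition sQ c"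
      then obtain c where "has_composition sP c" "has_composition sQ c" by blast
      then have "has_composition (w @ sP) (map snd bs1 @ c)" "has_composition (w @ sQ) (map snd bs1 @ c)"
        using hc_append[OF b1(1,2)] by auto
      then show False using 3(3) by blast
    qed
    then show ?thesis using b1 b2 by (simp add: mismatch_def coll_nrm hc_nrm)
  qed
qed

lemma not_mismatch_self: "\<not> mismatch X X"
  by (auto simp: mismatch_def collectable_def)

lemma nrm_not: "s \<noteq> [] \<Longrightarrow> nrm (map Not s) = nrm s"
proof -
  assume "s \<noteq> []"
  moreover have "map Not (map Not s) = s" by (induction s) auto
  ultimately show ?thesis by (auto simp: nrm_def nth_map)
qed

lemma pattern_nrm_drop:
  assumes "is_pattern r P" "count_list (take (2*K) P) True = K" "count_list (take (2*K) P) False = K"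
    "K < r"
  shows "is_pattern (r - K) (nrm (drop (2*K) P))"
proof -
  define s where "s = drop (2*K) P"
  have lP: "length P = 2 * r" "count_list P True = r" "count_list P False = r"
    using assms(1) by (auto simp: is_pattern_def)
  have ls: "length s = 2 * (r - K)" using lP assms(4) by (simp add: s_def)
  have "count_list P True = count_list (take (2*K) P) True + count_list s True"
    unfolding s_def by (metis append_take_drop_id count_list_append)
  then have cT: "count_list s True = r - K" using lP assms(2) by simp
  have "count_list P False = count_list (take (2*K) P) False + count_list s False"
    unfolding s_def by (metis append_take_drop_id count_list_append)
  then have cF: "count_list s False = r - K" using lP assms(3) by simp
  have sne: "s \<noteq> []" using ls assms(4) by auto
  show ?thesis
  proof (cases "s ! 0")
    case True
    then show ?thesis using ls cT cF sne
      by (auto simp: is_pattern_def nrm_def s_def[symmetric] hd_conv_nth)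
  next
    case False
    have "map Not s ! 0 = (\<not> s ! 0)" using sne by (simp add: nth_map)
    then show ?thesis using ls cT cF sne False
      by (auto simp: is_pattern_def nrm_def s_def[symmetric] hd_conv_nth count_not_T count_not_F nth_map)
  qed
qed

lemma pattern1: "is_pattern 1 X \<Longrightarrow> X = [True, False]"
proof -
  assume a: "is_pattern 1 X"
  then have "length X = 2" "hd X = True" "count_list X True = 1" by (auto simp: is_pattern_def)
  then show ?thesis
    by (cases X; cases "tl X"; auto split: if_splits)
qed

definition HD :: "'a::linorder set set \<Rightarrow> nat \<Rightarrow> 'a set \<Rightarrow> 'a set" where
  "HD M K V = {v\<in>V. rk M v \<le> K}"
definition TL :: "'a::linorder set set \<Rightarrow> nat \<Rightarrow> 'a set \<Rightarrow> 'a set" where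
  "TL M K V = {v\<in>V. K < rk M v}"

lemma om_restrict:
  assumes "ordered_matching r V M" "S \<subseteq> V" "\<forall>e\<in>M. card (e \<inter> S) = r'"
  shows "ordered_matching r' S ((\<lambda>e. e \<inter> S) ` M)"
  unfolding ordered_matching_def
proof (intro conjI)
  show "\<forall>e\<in>(\<lambda>e. e \<inter> S) ` M. e \<subseteq> S \<and> card e = r'" using assms(3) by auto
  show "\<forall>e\<in>(\<lambda>e. e \<inter> S) ` M. \<forall>f\<in>(\<lambda>e. e \<inter> S) ` M. e \<noteq> f \<longrightarrow> e \<inter> f = {}"
    using om_disj[OF assms(1)] by fastforce
  show "\<Union> ((\<lambda>e. e \<inter> S) ` M) = S" using assms(1,2) by (auto simp: ordered_matching_def)
qed

lemma card_less_eq: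
  fixes g :: "'b \<Rightarrow> 'c::linorder"
  assumes "finite S" "a \<in> S" "b \<in> S" "card {x\<in>S. g x < g a} = card {x\<in>S. g x < g b}"
  shows "g a = g b"
proof (rule ccontr)
  assume ne: "g a \<noteq> g b"
  have lt: "card {x\<in>S. g x < g c} < card {x\<in>S. g x < g d}" if "c \<in> S" "d \<in> S" "g c < g d" for c d
  proof (rule psubset_card_mono)
    show "finite {x\<in>S. g x < g d}" using assms(1) by simp
    have "{x\<in>S. g x < g c} \<subseteq> {x\<in>S. g x < g d}" using that by auto
    moreover have "c \<in> {x\<in>S. g x < g d}" "c \<notin> {x\<in>S. g x < g c}" using that by auto
    ultimately show "{x\<in>S. g x < g c} \<subset> {x\<in>S. g x < g d}" by blast
  qed
  consider "g a < g b" | "g b < g a" using ne by fastforce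
  then show False using lt assms by cases fastforce+
qed

locale cs =
  fixes r K :: nat and P Q :: "bool list" and V :: "'a::linorder set" and M :: "'a set set"
  assumes fin: "finite V" and cl: "is_clique r V {P, Q} M"
    and tk: "take (2*K) Q = take (2*K) P"
    and cT: "count_list (take (2*K) P) True = K" and cF: "count_list (take (2*K) P) False = K"
    and K1: "1 \<le> K" and Kr: "K < r"
begin

lemma om: "ordered_matching r V M" using cl by (simp add: is_clique_def)
lemma finE: "e \<in> M \<Longrightarrow> finite e" using om_fin[OF om fin] .
lemma pat: "e \<in> M \<Longrightarrow> f \<in> M \<Longrightarrow> e \<noteq> f \<Longrightarrow> edge_pattern e f \<in> {P, Q}"
  using cl by (simp add: is_clique_def)
lemma cardE: "e \<in> M \<Longrightarrow> card e = r" using om_card[OF om] .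
lemma subV: "e \<in> M \<Longrightarrow> e \<subseteq> V" using om_edge_sub[OF om] .
lemma disj: "e \<in> M \<Longrightarrow> f \<in> M \<Longrightarrow> e \<noteq> f \<Longrightarrow> e \<inter> f = {}" using om_disj[OF om] .

lemma pw_ep: 
  assumes "e \<in> M" "f \<in> M" "e \<noteq> f"
  shows "pair_word e f = (if Min e < Min f then edge_pattern e f else map Not (edge_pattern e f))"
proof -
  have "map Not (map Not X) = X" for X :: "bool list" by (induction X) auto
  then show ?thesis using ep_alt[OF disj[OF assms]] by auto
qed

lemma takeW:
  assumes "e \<in> M" "f \<in> M" "e \<noteq> f"
  shows "count_list (take (2*K) (pair_word e f)) True = K \<and> count_list (take (2*K) (pair_word e f)) False = K"
proof -
  have "take (2*K) (edge_pattern e f) = take (2*K) P" using pat[OF assms] tk by auto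
  then show ?thesis using pw_ep[OF assms] cT cF by (auto simp: take_map count_not_T count_not_F)
qed

lemma cutl:
  assumes "x \<in> V" "y \<in> V" "rk M x \<le> K" "K < rk M y"
  shows "x < y"
proof -
  define f where "f = edge_of M x"
  define e where "e = edge_of M y"
  have fM: "f \<in> M" "x \<in> f" using om_edge_of_in[OF om assms(1)] by (auto simp: f_def)
  have eM: "e \<in> M" "y \<in> e" using om_edge_of_in[OF om assms(2)] by (auto simp: e_def)
  have rx: "rnk f x \<le> K" using assms(3) by (simp add: rk_def f_def)
  have ry: "K < rnk e y" using assms(4) by (simp add: rk_def e_def)
  show ?thesis
  proof (rule ccontr)
    assume "\<not> x < y"
    then have yx: "y \<le> x" by simp
    show False
    proof (cases "e = f")
      case True
      then show False using rnk_mono[OF finE[OF eM(1)] yx] rx ry by simp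
    next
      case False
      have dj: "e \<inter> f = {}" using disj[OF eM(1) fM(1) False] .
      then have yx': "y < x" using yx eM(2) fM(2) by (metis disjoint_iff order_le_less)
      have fe: "finite e" "finite f" using finE eM fM by auto
      have sp: "pair_word e f = pair_word {z\<in>e. z \<le> y} {z\<in>f. z \<le> y} @ pair_word {z\<in>e. \<not> z \<le> y} {z\<in>f. \<not> z \<le> y}"
        by (rule pw_split[OF fe]) auto
      have c1: "count_list (pair_word {z\<in>e. z \<le> y} {z\<in>f. z \<le> y}) True = rnk e y"
        using pw_countT[of "{z\<in>e. z \<le> y}" "{z\<in>f. z \<le> y}"] fe by (simp add: rnk_def)
      have c2: "count_list (pair_word {z\<in>e. z \<le> y} {z\<in>f. z \<le> y}) False = card {z\<in>f. z \<le> y}"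
        using pw_countF[of "{z\<in>e. z \<le> y}" "{z\<in>f. z \<le> y}"] fe dj by (simp add: disjoint_iff)
      have "card {z\<in>f. z \<le> y} \<le> card {z\<in>f. z < x}"
        by (rule card_mono) (use fe yx' in auto)
      also have "\<dots> = rnk f x - 1" using rnk_less[OF fe(2) fM(2)] .
      finally have "card {z\<in>f. z \<le> y} < K" using rx rnk_pos[OF fe(2) fM(2)] by simp
      then have "count_list (pair_word {z\<in>e. z \<le> y} {z\<in>f. z \<le> y}) True \<le> K"
        using bal_prefix[OF sp] takeW[OF eM(1) fM(1) False] c2 by simp
      then show False using c1 ry by simp
    qed
  qed
qed

lemma headE: "e \<in> M \<Longrightarrow> e \<inter> HD M K V = {x\<in>e. rnk e x \<le> K}"
  using subV om_rk[OF om] by (auto simp: HD_def)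
lemma tailE: "e \<in> M \<Longrightarrow> e \<inter> TL M K V = {x\<in>e. K < rnk e x}"
  using subV om_rk[OF om] by (auto simp: TL_def)

lemma card_head: "e \<in> M \<Longrightarrow> card (e \<inter> HD M K V) = K"
  using headE card_rnk_le[OF finE] cardE Kr by simp

lemma card_tail: "e \<in> M \<Longrightarrow> card (e \<inter> TL M K V) = r - K"
proof -
  assume e: "e \<in> M"
  have "e = {x\<in>e. rnk e x \<le> K} \<union> {x\<in>e. K < rnk e x}" by auto
  then have "card e = card {x\<in>e. rnk e x \<le> K} + card {x\<in>e. K < rnk e x}"
    using finE[OF e] by (metis (no_types, lifting) card_Un_disjoint disjoint_iff finite_Un mem_Collect_eq not_le)
  then show ?thesis using card_head[OF e] headE[OF e] tailE[OF e] cardE[OF e] by simp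
qed

lemma head_ne: "e \<in> M \<Longrightarrow> e \<inter> HD M K V \<noteq> {}"
  using card_head K1 by fastforce
lemma tail_ne: "e \<in> M \<Longrightarrow> e \<inter> TL M K V \<noteq> {}"
  using card_tail Kr by fastforce

lemma VHT: "V = HD M K V \<union> TL M K V" "HD M K V \<inter> TL M K V = {}"
  by (auto simp: HD_def TL_def)

lemma e_split: "e \<in> M \<Longrightarrow> e = (e \<inter> HD M K V) \<union> (e \<inter> TL M K V)"
  using subV VHT by blast

lemma head_lt_tail: "x \<in> HD M K V \<Longrightarrow> y \<in> TL M K V \<Longrightarrow> x < y"
  using cutl by (auto simp: HD_def TL_def)

lemma headmin: "e \<in> M \<Longrightarrow> Min e = Min (e \<inter> HD M K V)"
proof -
  assume e: "e \<in> M"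
  have fe: "finite e" using finE[OF e] .
  have ne: "e \<inter> HD M K V \<noteq> {}" using head_ne[OF e] .
  have m1: "Min (e \<inter> HD M K V) \<in> e \<inter> HD M K V" using ne fe by (intro Min_in) auto
  have m0: "Min e \<in> e" using ne fe by (intro Min_in) auto
  have le1: "Min e \<le> Min (e \<inter> HD M K V)" using m1 fe by simp
  have "Min e \<in> HD M K V"
  proof (rule ccontr)
    assume "Min e \<notin> HD M K V"
    then have "Min e \<in> TL M K V" using m0 subV[OF e] VHT by blast
    then have "Min (e \<inter> HD M K V) < Min e" using head_lt_tail m1 by blast
    then show False using le1 by simp
  qed
  then have "Min (e \<inter> HD M K V) \<le> Min e" using m0 fe by simp
  then show ?thesis using le1 by simp
qed

lemma pw_split_HT:
  assumes "e \<in> M" "f \<in> M"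
  shows "pair_word e f = pair_word (e \<inter> HD M K V) (f \<inter> HD M K V) @ pair_word (e \<inter> TL M K V) (f \<inter> TL M K V)"
proof -
  have fe: "finite e" "finite f" using finE assms by auto
  have sep: "\<forall>x\<in>e\<union>f. \<forall>y\<in>e\<union>f. x \<in> HD M K V \<longrightarrow> \<not> y \<in> HD M K V \<longrightarrow> x < y"
    using head_lt_tail subV assms VHT by blast
  have "pair_word e f = pair_word {x\<in>e. x \<in> HD M K V} {x\<in>f. x \<in> HD M K V} @ pair_word {x\<in>e. x \<notin> HD M K V} {x\<in>f. x \<notin> HD M K V}"
    using pw_split[OF fe sep] by simp
  moreover have "{x\<in>e. x \<in> HD M K V} = e \<inter> HD M K V" "{x\<in>f. x \<in> HD M K V} = f \<inter> HD M K V" by auto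
  moreover have "{x\<in>e. x \<notin> HD M K V} = e \<inter> TL M K V" "{x\<in>f. x \<notin> HD M K V} = f \<inter> TL M K V"
    using subV assms VHT by auto
  ultimately show ?thesis by simp
qed

end

context cs begin

definition MH where "MH = (\<lambda>e. e \<inter> HD M K V) ` M"
definition MT where "MT = (\<lambda>e. e \<inter> TL M K V) ` M"

lemma omH: "ordered_matching K (HD M K V) MH"
  unfolding MH_def by (rule om_restrict[OF om]) (use card_head in \<open>auto simp: HD_def\<close>)
lemma omT: "ordered_matching (r - K) (TL M K V) MT"
  unfolding MT_def by (rule om_restrict[OF om]) (use card_tail in \<open>auto simp: TL_def\<close>)

lemma finH: "finite (HD M K V)" using fin by (simp add: HD_def)
lemma finT: "finite (TL M K V)" using fin by (simp add: TL_def)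

lemma rkH:
  assumes v: "v \<in> HD M K V"
  shows "rk MH v = rk M v"
proof -
  have vV: "v \<in> V" using v by (simp add: HD_def)
  define e where "e = edge_of M v"
  have eM: "e \<in> M" "v \<in> e" using om_edge_of_in[OF om vV] by (auto simp: e_def)
  have "e \<inter> HD M K V \<in> MH" using eM by (simp add: MH_def)
  then have ee: "edge_of MH v = e \<inter> HD M K V" using om_edge_of[OF omH] eM v by simp
  have rv: "rk M v = rnk e v" using om_rk[OF om eM] .
  have "{y \<in> e \<inter> HD M K V. y \<le> v} = {y\<in>e. y \<le> v}"
  proof
    show "{y \<in> e. y \<le> v} \<subseteq> {y \<in> e \<inter> HD M K V. y \<le> v}"
    proof
      fix y assume y: "y \<in> {y \<in> e. y \<le> v}"
      then have "rnk e y \<le> rnk e v" using rnk_mono[OF finE[OF eM(1)]] by simp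
      moreover have "rk M y = rnk e y" using om_rk[OF om eM(1)] y by simp
      moreover have "rk M v \<le> K" using v by (simp add: HD_def)
      ultimately show "y \<in> {y \<in> e \<inter> HD M K V. y \<le> v}" using y subV[OF eM(1)] rv by (auto simp: HD_def)
    qed
  qed auto
  then show ?thesis using ee rv by (simp add: rk_def rnk_def)
qed

lemma rkT:
  assumes v: "v \<in> TL M K V"
  shows "rk MT v = rk M v - K"
proof -
  have vV: "v \<in> V" using v by (simp add: TL_def)
  define e where "e = edge_of M v"
  have eM: "e \<in> M" "v \<in> e" using om_edge_of_in[OF om vV] by (auto simp: e_def)
  have "e \<inter> TL M K V \<in> MT" using eM by (simp add: MT_def)
  then have ee: "edge_of MT v = e \<inter> TL M K V" using om_edge_of[OF omT] eM v by simp
  have rv: "rk M v = rnk e v" using om_rk[OF om eM] .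
  have fe: "finite e" using finE[OF eM(1)] .
  have un: "{y\<in>e. y \<le> v} = (e \<inter> HD M K V) \<union> {y \<in> e \<inter> TL M K V. y \<le> v}"
  proof
    show "{y \<in> e. y \<le> v} \<subseteq> e \<inter> HD M K V \<union> {y \<in> e \<inter> TL M K V. y \<le> v}"
      using subV[OF eM(1)] VHT by blast
    show "e \<inter> HD M K V \<union> {y \<in> e \<inter> TL M K V. y \<le> v} \<subseteq> {y \<in> e. y \<le> v}"
      using head_lt_tail[OF _ v] by fastforce
  qed
  have "card {y\<in>e. y \<le> v} = card (e \<inter> HD M K V) + card {y \<in> e \<inter> TL M K V. y \<le> v}"
    unfolding un by (rule card_Un_disjoint) (use fe VHT in auto)
  then have "rnk e v = K + rnk (e \<inter> TL M K V) v" using card_head[OF eM(1)] by (simp add: rnk_def)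
  then show ?thesis using ee rv by (simp add: rk_def)
qed

lemma parts:
  assumes "e \<in> M" "f \<in> M" "e \<noteq> f"
  shows "take (2*K) (pair_word e f) = pair_word (e \<inter> HD M K V) (f \<inter> HD M K V)"
    "drop (2*K) (pair_word e f) = pair_word (e \<inter> TL M K V) (f \<inter> TL M K V)"
proof -
  have fe: "finite (e \<inter> HD M K V)" "finite (f \<inter> HD M K V)" using finE assms by auto
  have "length (pair_word (e \<inter> HD M K V) (f \<inter> HD M K V)) = card ((e \<inter> HD M K V) \<union> (f \<inter> HD M K V))"
    using pw_length[OF fe] .
  also have "\<dots> = card (e \<inter> HD M K V) + card (f \<inter> HD M K V)"
    by (rule card_Un_disjoint[OF fe]) (use disj[OF assms] in blast)
  also have "\<dots> = 2 * K" using card_head assms by simp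
  finally have l: "length (pair_word (e \<inter> HD M K V) (f \<inter> HD M K V)) = 2 * K" .
  show "take (2*K) (pair_word e f) = pair_word (e \<inter> HD M K V) (f \<inter> HD M K V)"
    using pw_split_HT[OF assms(1,2)] l by simp
  show "drop (2*K) (pair_word e f) = pair_word (e \<inter> TL M K V) (f \<inter> TL M K V)"
    using pw_split_HT[OF assms(1,2)] l by simp
qed

lemma ep_pw:
  assumes "e \<in> M" "f \<in> M" "e \<noteq> f"
  shows "edge_pattern e f = (if Min e < Min f then pair_word e f else map Not (pair_word e f))"
  using ep_alt[OF disj[OF assms]] .

lemma dropT:
  assumes "e \<in> M" "f \<in> M" "e \<noteq> f"
  shows "drop (2*K) (edge_pattern e f) = (if Min e < Min f then pair_word (e \<inter> TL M K V) (f \<inter> TL M K V)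
     else map Not (pair_word (e \<inter> TL M K V) (f \<inter> TL M K V)))"
  using ep_pw[OF assms] parts[OF assms] by (simp add: drop_map)

lemma takeH:
  assumes "e \<in> M" "f \<in> M" "e \<noteq> f"
  shows "edge_pattern (e \<inter> HD M K V) (f \<inter> HD M K V) = take (2*K) (edge_pattern e f)"
proof -
  have dj: "(e \<inter> HD M K V) \<inter> (f \<inter> HD M K V) = {}" using disj[OF assms] by auto
  show ?thesis using ep_alt[OF dj] ep_pw[OF assms] parts[OF assms] headmin assms
    by (simp add: take_map)
qed

lemma cliqueH: "is_clique K (HD M K V) {take (2*K) P} MH"
  unfolding is_clique_def
proof (intro conjI omH ballI impI)
  fix a b assume ab: "a \<in> MH" "b \<in> MH" "a \<noteq> b"
  then obtain e f where ef: "e \<in> M" "f \<in> M" "a = e \<inter> HD M K V" "b = f \<inter> HD M K V"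
    by (auto simp: MH_def)
  then have "e \<noteq> f" using ab by auto
  then have "edge_pattern a b = take (2*K) (edge_pattern e f)" using takeH ef by simp
  then show "edge_pattern a b \<in> {take (2*K) P}" using pat[OF ef(1,2) \<open>e \<noteq> f\<close>] tk by auto
qed

lemma nrm_eq:
  assumes "X ! 0 = True" "X \<in> {T, map Not T}" "D \<in> {T, map Not T}" "T \<noteq> []"
  shows "nrm D = X"
proof -
  have inv: "map Not (map Not Y) = Y" for Y :: "bool list" by (induction Y) auto
  show ?thesis
  proof (cases "D = X")
    case True
    then show ?thesis using assms by (simp add: nrm_def)
  next
    case False
    then have "D = map Not X" using assms inv by auto
    then show ?thesis using assms inv by (auto simp: nrm_def nth_map)
  qed
qed

lemma cliqueT: "is_clique (r - K) (TL M K V) {nrm (drop (2*K) P), nrm (drop (2*K) Q)} MT"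
  unfolding is_clique_def
proof (intro conjI omT ballI impI)
  fix a b assume ab: "a \<in> MT" "b \<in> MT" "a \<noteq> b"
  then obtain e f where ef: "e \<in> M" "f \<in> M" "a = e \<inter> TL M K V" "b = f \<inter> TL M K V"
    by (auto simp: MT_def)
  then have nef: "e \<noteq> f" using ab by auto
  have dj: "a \<inter> b = {}" using disj[OF ef(1,2) nef] ef by auto
  have fab: "finite a" "finite b" using finE ef by auto
  have ne: "a \<noteq> {}" "b \<noteq> {}" using tail_ne ef by auto
  have x0: "edge_pattern a b ! 0 = True" using ep_nth0[OF fab ne dj] .
  have T: "edge_pattern a b \<in> {pair_word a b, map Not (pair_word a b)}" using ep_alt[OF dj] by simp
  have D: "drop (2*K) (edge_pattern e f) \<in> {pair_word a b, map Not (pair_word a b)}"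
    using dropT[OF ef(1,2) nef] ef by simp
  have "pair_word a b \<noteq> []" using ne fab by (simp add: pair_word_def)
  then have "nrm (drop (2*K) (edge_pattern e f)) = edge_pattern a b" using nrm_eq x0 T D by blast
  then show "edge_pattern a b \<in> {nrm (drop (2*K) P), nrm (drop (2*K) Q)}"
    using pat[OF ef(1,2) nef] by auto
qed

end

lemma inj_restrict:
  assumes "ordered_matching r V M" "\<forall>e\<in>M. e \<inter> S \<noteq> {}"
  shows "inj_on (\<lambda>e. e \<inter> S) M"
proof (rule inj_onI)
  fix x y assume xy: "x \<in> M" "y \<in> M" "x \<inter> S = y \<inter> S"
  show "x = y"
  proof (rule ccontr)
    assume "x \<noteq> y"
    then have "x \<inter> y = {}" using om_disj[OF assms(1) xy(1,2)] by simp
    moreover have "x \<inter> S \<noteq> {}" using assms(2) xy(1) by simp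
    ultimately show False using xy(3) by blast
  qed
qed

lemma reassemble:
  fixes M N :: "'a::linorder set set"
  assumes oM: "ordered_matching r V M" and oN: "ordered_matching r V N" and fin: "finite V"
    and VV: "V = A \<union> B"
    and neM: "\<forall>e\<in>M. e \<inter> A \<noteq> {} \<and> e \<inter> B \<noteq> {}" and neN: "\<forall>e\<in>N. e \<inter> A \<noteq> {} \<and> e \<inter> B \<noteq> {}"
    and minM: "\<forall>e\<in>M. Min e = Min (e \<inter> A)" and minN: "\<forall>e\<in>N. Min e = Min (e \<inter> A)"
    and HH: "(\<lambda>e. e \<inter> A) ` M = (\<lambda>e. e \<inter> A) ` N"
    and TT: "(\<lambda>e. e \<inter> B) ` M = (\<lambda>e. e \<inter> B) ` N"
    and orient: "\<forall>e\<in>M. \<forall>f\<in>M. \<forall>e2\<in>N. \<forall>f2\<in>N. e \<noteq> f \<longrightarrow> e \<inter> B = e2 \<inter> B \<longrightarrow> f \<inter> B = f2 \<inter> B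
        \<longrightarrow> (Min e < Min f \<longleftrightarrow> Min e2 < Min f2)"
  shows "M \<subseteq> N"
proof
  fix e assume e: "e \<in> M"
  have finM: "finite M" using om_finM[OF oM fin] .
  have finN: "finite N" using om_finM[OF oN fin] .
  have iBM: "inj_on (\<lambda>e. e \<inter> B) M" using inj_restrict[OF oM] neM by blast
  have iBN: "inj_on (\<lambda>e. e \<inter> B) N" using inj_restrict[OF oN] neN by blast
  have iAM: "inj_on (\<lambda>e. e \<inter> A) M" using inj_restrict[OF oM] neM by blast
  have iAN: "inj_on (\<lambda>e. e \<inter> A) N" using inj_restrict[OF oN] neN by blast
  obtain e2 where e2: "e2 \<in> N" "e2 \<inter> B = e \<inter> B" using TT e by (metis imageE imageI)
  define L where "L = {f\<in>M. Min f < Min e}"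
  define L2 where "L2 = {f2\<in>N. Min f2 < Min e2}"
  have imgB: "(\<lambda>x. x \<inter> B) ` L = (\<lambda>x. x \<inter> B) ` L2"
  proof
    show "(\<lambda>x. x \<inter> B) ` L \<subseteq> (\<lambda>x. x \<inter> B) ` L2"
    proof
      fix t assume "t \<in> (\<lambda>x. x \<inter> B) ` L"
      then obtain f where f: "f \<in> M" "Min f < Min e" "t = f \<inter> B" by (auto simp: L_def)
      obtain f2 where f2: "f2 \<in> N" "f2 \<inter> B = f \<inter> B" using TT f(1) by (metis imageE imageI)
      have "f \<noteq> e" using f by auto
      then have "Min f2 < Min e2" using orient f e e2 f2 by metis
      then show "t \<in> (\<lambda>x. x \<inter> B) ` L2" using f f2 by (auto simp: L2_def)
    qed
    show "(\<lambda>x. x \<inter> B) ` L2 \<subseteq> (\<lambda>x. x \<inter> B) ` L"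
    proof
      fix t assume "t \<in> (\<lambda>x. x \<inter> B) ` L2"
      then obtain f2 where f2: "f2 \<in> N" "Min f2 < Min e2" "t = f2 \<inter> B" by (auto simp: L2_def)
      obtain f where f: "f \<in> M" "f \<inter> B = f2 \<inter> B" using TT f2(1) by (metis imageE imageI)
      have "f \<noteq> e"
      proof
        assume "f = e"
        then have "f2 \<inter> B = e2 \<inter> B" using f e2 by simp
        then have "f2 = e2" using iBN f2(1) e2(1) by (meson inj_onD)
        then show False using f2 by simp
      qed
      then have "Min f < Min e" using orient f e e2 f2 by metis
      then show "t \<in> (\<lambda>x. x \<inter> B) ` L" using f f2 by (auto simp: L_def)
    qed
  qed
  have cL: "card L = card L2"
  proof -
    have "card ((\<lambda>x. x \<inter> B) ` L) = card L"
      by (rule card_image, rule inj_on_subset[OF iBM]) (auto simp: L_def)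
    moreover have "card ((\<lambda>x. x \<inter> B) ` L2) = card L2"
      by (rule card_image, rule inj_on_subset[OF iBN]) (auto simp: L2_def)
    ultimately show ?thesis using imgB by simp
  qed
  define H where "H = (\<lambda>x. x \<inter> A) ` M"
  have finH: "finite H" using finM by (simp add: H_def)
  have cL1: "card L = card {h\<in>H. Min h < Min (e \<inter> A)}"
  proof -
    have "(\<lambda>x. x \<inter> A) ` L = {h\<in>H. Min h < Min (e \<inter> A)}"
      using minM e by (auto simp: L_def H_def)
    moreover have "card ((\<lambda>x. x \<inter> A) ` L) = card L"
      by (rule card_image, rule inj_on_subset[OF iAM]) (auto simp: L_def)
    ultimately show ?thesis by simp
  qed
  have cL2: "card L2 = card {h\<in>H. Min h < Min (e2 \<inter> A)}"
  proof -
    have "(\<lambda>x. x \<inter> A) ` L2 = {h\<in>H. Min h < Min (e2 \<inter> A)}"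
      using minN e2 unfolding L2_def H_def HH by auto
    moreover have "card ((\<lambda>x. x \<inter> A) ` L2) = card L2"
      by (rule card_image, rule inj_on_subset[OF iAN]) (auto simp: L2_def)
    ultimately show ?thesis by simp
  qed
  have eH: "e \<inter> A \<in> H" using e by (simp add: H_def)
  have e2H: "e2 \<inter> A \<in> H" using e2 HH by (simp add: H_def)
  have mm: "Min (e \<inter> A) = Min (e2 \<inter> A)"
    using card_less_eq[OF finH eH e2H, of Min] cL cL1 cL2 by simp
  obtain f where f: "f \<in> M" "f \<inter> A = e2 \<inter> A" using e2H by (auto simp: H_def)
  have "e = f"
  proof (rule ccontr)
    assume "e \<noteq> f"
    then have dj: "e \<inter> f = {}" using om_disj[OF oM e f(1)] by simp
    have fe: "finite e" "finite f" using om_fin[OF oM fin] e f by auto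
    have "Min (e \<inter> A) \<in> e \<inter> A" using neM e fe by (intro Min_in) auto
    moreover have "Min (f \<inter> A) \<in> f \<inter> A" using neM f(1) fe by (intro Min_in) auto
    ultimately show False using mm f(2) dj by auto
  qed
  then have hA: "e \<inter> A = e2 \<inter> A" using f by simp
  have "e = (e \<inter> A) \<union> (e \<inter> B)" using om_edge_sub[OF oM e] VV by blast
  also have "\<dots> = (e2 \<inter> A) \<union> (e2 \<inter> B)" using hA e2 by simp
  also have "\<dots> = e2" using om_edge_sub[OF oN e2(1)] VV by blast
  finally show "e \<in> N" using e2 by simp
qed

theorem main_gen:
  fixes r :: nat
  shows "\<forall>P Q (V::'a::linorder set) M N. 2 \<le> r \<longrightarrow> is_pattern r P \<longrightarrow> is_pattern r Q \<longrightarrow> mismatch P Q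
    \<longrightarrow> finite V \<longrightarrow> is_clique r V {P, Q} M \<longrightarrow> is_clique r V {P, Q} N
    \<longrightarrow> (\<forall>v\<in>V. rk M v = rk N v) \<longrightarrow> M = N"
proof (induction r rule: less_induct)
  case (less r)
  show ?case
  proof (intro allI impI)
    fix P Q and V :: "'a set" and M N
    assume r2: "2 \<le> r" and pP: "is_pattern r P" and pQ: "is_pattern r Q" and mm: "mismatch P Q"
      and fin: "finite V" and cM: "is_clique r V {P, Q} M" and cN: "is_clique r V {P, Q} N"
      and rkeq: "\<forall>v\<in>V. rk M v = rk N v"
    have oM: "ordered_matching r V M" and oN: "ordered_matching r V N"
      using cM cN by (auto simp: is_clique_def)
    have lP: "length P = 2 * r" and lQ: "length Q = 2 * r" using pP pQ by (auto simp: is_pattern_def)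
    show "M = N"
    proof (rule ccontr)
      assume ne: "M \<noteq> N"
      obtain k R1 R2 where R: "R1 \<in> {P, Q}" "R2 \<in> {P, Q}" "1 \<le> k" "2*k < length R1" "2*k < length R2"
        "take (2*k) R1 = take (2*k) R2" "R1 ! (2*k) \<noteq> R2 ! (2*k)"
        "count_list (take (2*k) R1) True = k" "count_list (take (2*k) R1) False = k"
      proof -
        have "1 \<le> r" using r2 by simp
        from first_diff[OF fin this cM cN rkeq ne] show ?thesis using that by blast
      qed
      have PQ: "take (2*k) Q = take (2*k) P" "P ! (2*k) \<noteq> Q ! (2*k)"
        "count_list (take (2*k) P) True = k" "count_list (take (2*k) P) False = k"
        using R by auto
      have kr: "k < r" using R(4) R(1) lP lQ by auto
      interpret IM: cs r k P Q V M using fin cM PQ R(3) kr by unfold_locales auto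
      interpret IN: cs r k P Q V N using fin cN PQ R(3) kr by unfold_locales auto
      have HDeq: "HD N k V = HD M k V" using rkeq by (auto simp: HD_def)
      have TLeq: "TL N k V = TL M k V" using rkeq by (auto simp: TL_def)
      define w where "w = take (2*k) P"
      define sP where "sP = drop (2*k) P"
      define sQ where "sQ = drop (2*k) Q"
      have Pw: "P = w @ sP" by (simp add: w_def sP_def)
      have Qw: "Q = w @ sQ" using PQ(1) by (metis append_take_drop_id sQ_def w_def)
      have wbal: "count_list w True = count_list w False" using PQ by (simp add: w_def)
      have mm': "mismatch (nrm sP) (nrm sQ)" using mismatch_suffix[of w sP sQ] mm Pw Qw wbal by simp
      have pat': "is_pattern (r - k) (nrm sP)" "is_pattern (r - k) (nrm sQ)"
        using pattern_nrm_drop[OF pP PQ(3,4) kr] pattern_nrm_drop[OF pQ _ _ kr] PQ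
        by (auto simp: sP_def sQ_def)
      have rk2: "2 \<le> r - k"
      proof (rule ccontr)
        assume "\<not> 2 \<le> r - k"
        then have "r - k = 1" using kr by simp
        then have "nrm sP = nrm sQ" using pat' pattern1 by metis
        then show False using mm' not_mismatch_self by metis
      qed
      have IH: "\<forall>P Q (V::'a set) M N. 2 \<le> r - k \<longrightarrow> is_pattern (r - k) P \<longrightarrow> is_pattern (r - k) Q \<longrightarrow> mismatch P Q
        \<longrightarrow> finite V \<longrightarrow> is_clique (r - k) V {P, Q} M \<longrightarrow> is_clique (r - k) V {P, Q} N
        \<longrightarrow> (\<forall>v\<in>V. rk M v = rk N v) \<longrightarrow> M = N"
        using less.IH[of "r - k"] kr R(3) by simp
      have cTM: "is_clique (r - k) (TL M k V) {nrm sP, nrm sQ} IM.MT"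
        using IM.cliqueT by (simp add: sP_def sQ_def)
      have cTN: "is_clique (r - k) (TL M k V) {nrm sP, nrm sQ} IN.MT"
        using IN.cliqueT TLeq by (simp add: sP_def sQ_def)
      have rkT: "\<forall>v\<in>TL M k V. rk IM.MT v = rk IN.MT v"
        using IM.rkT IN.rkT TLeq rkeq by (auto simp: TL_def)
      have MTeq: "IM.MT = IN.MT"
        using IH rk2 pat' mm' IM.finT cTM cTN rkT by blast
      have MHeq: "IM.MH = IN.MH"
      proof (rule ccontr)
        assume neH: "IM.MH \<noteq> IN.MH"
        have cHM: "is_clique k (HD M k V) {w} IM.MH" using IM.cliqueH by (simp add: w_def)
        have cHN: "is_clique k (HD M k V) {w} IN.MH" using IN.cliqueH HDeq by (simp add: w_def)
        have rkH: "\<forall>v\<in>HD M k V. rk IM.MH v = rk IN.MH v"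
          using IM.rkH IN.rkH HDeq rkeq by (auto simp: HD_def)
        show False using first_diff[OF IM.finH R(3) cHM cHN rkH neH] by auto
      qed
      have orient: "\<forall>e\<in>M. \<forall>f\<in>M. \<forall>e2\<in>N. \<forall>f2\<in>N. e \<noteq> f \<longrightarrow> e \<inter> TL M k V = e2 \<inter> TL M k V
          \<longrightarrow> f \<inter> TL M k V = f2 \<inter> TL M k V \<longrightarrow> (Min e < Min f \<longleftrightarrow> Min e2 < Min f2)"
      proof (intro ballI impI)
        fix e f e2 f2 assume ef: "e \<in> M" "f \<in> M" "e2 \<in> N" "f2 \<in> N" "e \<noteq> f"
          "e \<inter> TL M k V = e2 \<inter> TL M k V" "f \<inter> TL M k V = f2 \<inter> TL M k V"
        have n2: "e2 \<noteq> f2"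
        proof
          assume "e2 = f2"
          then have "e \<inter> TL M k V = f \<inter> TL M k V" using ef by simp
          moreover have "e \<inter> f = {}" using IM.disj ef by simp
          moreover have "e \<inter> TL M k V \<noteq> {}" using IM.tail_ne ef(1) by simp
          ultimately show False by blast
        qed
        define T where "T = pair_word (e \<inter> TL M k V) (f \<inter> TL M k V)"
        have D1: "drop (2*k) (edge_pattern e f) = (if Min e < Min f then T else map Not T)"
          using IM.dropT[OF ef(1,2,5)] by (simp add: T_def)
        have D2: "drop (2*k) (edge_pattern e2 f2) = (if Min e2 < Min f2 then T else map Not T)"
          using IN.dropT[OF ef(3,4) n2] ef(6,7) TLeq by (simp add: T_def)
        have Tne: "T \<noteq> []"
        proof -
          have "e \<inter> TL M k V \<noteq> {}" using IM.tail_ne ef(1) by simp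
          moreover have "finite (e \<inter> TL M k V)" "finite (f \<inter> TL M k V)" using IM.finE ef(1,2) by auto
          ultimately show ?thesis by (simp add: T_def pair_word_def)
        qed
        have in1: "drop (2*k) (edge_pattern e f) \<in> {sP, sQ}" using IM.pat[OF ef(1,2,5)] by (auto simp: sP_def sQ_def)
        have in2: "drop (2*k) (edge_pattern e2 f2) \<in> {sP, sQ}" using IN.pat[OF ef(3,4) n2] by (auto simp: sP_def sQ_def)
        show "Min e < Min f \<longleftrightarrow> Min e2 < Min f2"
        proof (rule ccontr)
          assume diff: "\<not> (Min e < Min f \<longleftrightarrow> Min e2 < Min f2)"
          define X where "X = drop (2*k) (edge_pattern e f)"
          define Y where "Y = drop (2*k) (edge_pattern e2 f2)"
          have inv: "map Not (map Not Z) = Z" for Z :: "bool list" by (induction Z) auto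
          have XY: "X = map Not Y" using D1 D2 diff inv by (auto simp: X_def Y_def)
          have Yne: "Y \<noteq> []" using D2 Tne by (auto simp: Y_def)
          have "X \<noteq> Y"
          proof
            assume "X = Y"
            then have "Y ! 0 = (\<not> Y ! 0)" using XY Yne by (metis length_greater_0_conv nth_map)
            then show False by simp
          qed
          moreover have "nrm X = nrm Y" using XY nrm_not[OF Yne] by simp
          ultimately have "nrm sP = nrm sQ" using in1 in2 by (auto simp: X_def Y_def)
          then show False using mm' not_mismatch_self by metis
        qed
      qed
      have MN: "M \<subseteq> N"
      proof (rule reassemble[OF oM oN fin IM.VHT(1)])
        show "\<forall>e\<in>M. e \<inter> HD M k V \<noteq> {} \<and> e \<inter> TL M k V \<noteq> {}" using IM.head_ne IM.tail_ne by simp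
        show "\<forall>e\<in>N. e \<inter> HD M k V \<noteq> {} \<and> e \<inter> TL M k V \<noteq> {}" using IN.head_ne IN.tail_ne HDeq TLeq by simp
        show "\<forall>e\<in>M. Min e = Min (e \<inter> HD M k V)" using IM.headmin by simp
        show "\<forall>e\<in>N. Min e = Min (e \<inter> HD M k V)" using IN.headmin HDeq by simp
        show "(\<lambda>e. e \<inter> HD M k V) ` M = (\<lambda>e. e \<inter> HD M k V) ` N"
          using MHeq HDeq by (simp add: IM.MH_def IN.MH_def)
        show "(\<lambda>e. e \<inter> TL M k V) ` M = (\<lambda>e. e \<inter> TL M k V) ` N"
          using MTeq TLeq by (simp add: IM.MT_def IN.MT_def)
        show "\<forall>e\<in>M. \<forall>f\<in>M. \<forall>e2\<in>N. \<forall>f2\<in>N. e \<noteq> f \<longrightarrow> e \<inter> TL M k V = e2 \<inter> TL M k V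
          \<longrightarrow> f \<inter> TL M k V = f2 \<inter> TL M k V \<longrightarrow> (Min e < Min f \<longleftrightarrow> Min e2 < Min f2)" using orient .
      qed
      have "N \<subseteq> M"
      proof
        fix g assume g: "g \<in> N"
        have "card g = r" using om_card[OF oN g] .
        then obtain x where x: "x \<in> g" using r2 by fastforce
        have xV: "x \<in> V" using om_edge_sub[OF oN g] x by blast
        obtain e where e: "e \<in> M" "x \<in> e" using om_cover[OF oM xV] by blast
        have "e \<in> N" using MN e by blast
        then have "e = g" using om_edge_of[OF oN] e x g by metis
        then show "g \<in> M" using e by simp
      qed
      then show False using MN ne by simp
    qed
  qed
qed

theorem mainTheorem9:
  fixes r :: nat and P Q :: "bool list" and V :: "'a::linorder set" and M N :: "'a set set"
  assumes "r \<ge> 2"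
    and "is_pattern r P" and "is_pattern r Q"
    and "mismatch P Q"
    and "finite V"
    and "is_clique r V {P, Q} M" and "is_clique r V {P, Q} N"
    and "M \<noteq> N"
  shows "trace V M \<noteq> trace V N"
proof
  assume "trace V M = trace V N"
  then have "\<forall>v\<in>V. rk M v = rk N v" using trace_eq_rk[OF assms(5)] by blast
  then have "M = N" using main_gen[of r] assms by blast
  then show False using assms(8) by simp
qed

end
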